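(* Let $m_1(j)$, $m_2(j)$ ($j\in\mathbb{N}_0$) be sequences of nonzero numbers for which there exist polynomials $p_1,p_2$, not identically zero, and $c>0$ with $p_1(j)m_1(j)=p_2(j)m_2(j)c^j$ for every $j$. Let $k>0$, $d\in\mathbb{R}$, let $(a_j)$ be a sequence of complex numbers, and let $\widehat F_i(t)=\sum_{j=0}^\infty\frac{a_j}{m_i(j)}t^j$ for $i=1,2$. Then $F_1(t)\in\mathcal{O}^k(\widehat S_d)$ if and only if $F_2(t)\in\mathcal{O}^k(\widehat S_d)$.
   Context: Sectors: $S_d(\varepsilon)$ is the set of $t=\rho e^{i\theta}$ in the universal covering of $\mathbb{C}\setminus\{0\}$ with $\rho>0$, $|\theta-d|<\varepsilon/2$; disc-sector $\widehat S_d(\varepsilon;r_1)=S_d(\varepsilon)\cup\{|t|<r_1\}$; $\widehat S_d$ denotes a disc-sector in direction $d$ with some unspecified $\varepsilon,r_1>0$. $\mathcal{O}^k(\widehat S_d(\varepsilon;r_1))$ is the space of holomorphic $F$ on $\widehat S_d(\varepsilon;r_1)$ such that for all $\tilde\varepsilon<\varepsilon$, $\tilde r_1<r_1$ there are $A,B$ with $|F(t)|\le Ae^{B|t|^k}$ on $\widehat S_d(\tilde\varepsilon;\tilde r_1)$. The statement "$F_i\in\mathcal{O}^k(\widehat S_d)$" means that the formal series $\widehat F_i$ converges near $t=0$ and its sum $F_i$ extends to a function in $\mathcal{O}^k(\widehat S_d)$ for some disc-sector $\widehat S_d$. *)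

theory Defs
  imports "HOL-Analysis.Analysis" "HOL-Computational_Algebra.Polynomial"
begin

text \<open>Points of the sector S_d(eps) in the universal covering of C minus 0 are represented
  by logarithmic coordinates w = ln rho + i theta, i.e. the strip |Im w - d| < eps/2;
  the covering projection is exp.  A holomorphic function on the disc-sector
  S_d(eps) union {|t| < r1} is a pair (G, H): G holomorphic on the disc, H holomorphic on
  the strip (F in log coordinates), glued on the overlap (points of the sector with
  modulus < r1).\<close>

definition log_sector :: "real \<Rightarrow> real \<Rightarrow> complex set" where
  "log_sector d eps = {w. \<bar>Im w - d\<bar> < eps / 2}"

definition in_O_disc_sector ::
  "real \<Rightarrow> real \<Rightarrow> real \<Rightarrow> real \<Rightarrow> (complex \<Rightarrow> complex) \<Rightarrow> (complex \<Rightarrow> complex) \<Rightarrow> bool" where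
  "in_O_disc_sector k d eps r1 G H \<longleftrightarrow>
     G holomorphic_on ball 0 r1 \<and>
     H holomorphic_on log_sector d eps \<and>
     (\<forall>w \<in> log_sector d eps. Re w < ln r1 \<longrightarrow> H w = G (exp w)) \<and>
     (\<forall>eps' r1'. eps' < eps \<and> r1' < r1 \<longrightarrow>
        (\<exists>A B. (\<forall>z. norm z < r1' \<longrightarrow> norm (G z) \<le> A * exp (B * norm z powr k)) \<and>
               (\<forall>w \<in> log_sector d eps'. norm (H w) \<le> A * exp (B * exp (k * Re w)))))"

definition series_in_Ok :: "real \<Rightarrow> real \<Rightarrow> (nat \<Rightarrow> complex) \<Rightarrow> bool" where
  "series_in_Ok k d b \<longleftrightarrow>
     (\<exists>eps > 0. \<exists>r1 > 0. \<exists>G H.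
        in_O_disc_sector k d eps r1 G H \<and>
        (\<exists>r > 0. \<forall>z \<in> ball 0 r. (\<lambda>j. b j * z ^ j) sums G z))"

end

theory Submission
  imports Defs "HOL-Complex_Analysis.Complex_Analysis" "HOL-Computational_Algebra.Fundamental_Theorem_Algebra"
begin

definition grow :: "real \<Rightarrow> real \<Rightarrow> real \<Rightarrow> (complex \<Rightarrow> complex) \<Rightarrow> bool" where
"grow k d eps H \<longleftrightarrow> (\<forall>eps'<eps. \<exists>A\<ge>0. \<exists>B\<ge>0. \<forall>w\<in>log_sector d eps'. norm (H w) \<le> A * exp (B * exp (k * Re w)))"

definition Ok :: "real \<Rightarrow> real \<Rightarrow> (nat \<Rightarrow> complex) \<Rightarrow> bool" where
"Ok k d b \<longleftrightarrow> (\<exists>eps>0. \<exists>r>0. \<exists>G H. G holomorphic_on ball 0 r \<and> H holomorphic_on log_sector d eps \<and>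
   (\<forall>w\<in>log_sector d eps. Re w < ln r \<longrightarrow> H w = G (exp w)) \<and> grow k d eps H \<and>
   (\<forall>z\<in>ball 0 r. (\<lambda>j. b j * z ^ j) sums G z))"

lemma bound_norm: "(u::real) \<ge> 0 \<Longrightarrow> A * exp (B * u) \<le> max A 0 * exp (max B 0 * u)"
proof -
  assume u: "u \<ge> 0"
  have e: "exp (B*u) \<le> exp (max B 0 * u)" using u by (simp add: mult_right_mono)
  show ?thesis
  proof (cases "A \<le> 0")
    case True
    have "A * exp (B * u) \<le> 0" using True by (simp add: mult_nonpos_nonneg)
    also have "0 \<le> max A 0 * exp (max B 0 * u)" by simp
    finally show ?thesis .
  next
    case False
    then show ?thesis using e by (simp add: mult_left_mono)
  qed
qed

lemma Ok_imp_series: assumes "Ok k d b" shows "series_in_Ok k d b"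
proof -
  obtain eps r G H where e: "eps > 0" "r > 0" and hG: "G holomorphic_on ball 0 r" and hH: "H holomorphic_on log_sector d eps"
   and gl: "\<forall>w\<in>log_sector d eps. Re w < ln r \<longrightarrow> H w = G (exp w)" and gr: "grow k d eps H"
   and s: "\<forall>z\<in>ball 0 r. (\<lambda>j. b j * z ^ j) sums G z"
    using assms unfolding Ok_def by blast
  have "in_O_disc_sector k d eps r G H"
    unfolding in_O_disc_sector_def
  proof (intro conjI hG hH allI impI)
    show "\<forall>w\<in>log_sector d eps. Re w < ln r \<longrightarrow> H w = G (exp w)" by fact
    fix eps' r1' assume a: "eps' < eps \<and> r1' < r"
    obtain A0 B0 where AB: "A0 \<ge> 0" "B0 \<ge> 0" "\<forall>w\<in>log_sector d eps'. norm (H w) \<le> A0 * exp (B0 * exp (k * Re w))"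
      using gr a unfolding grow_def by blast
    have "cball 0 (max r1' 0) \<subseteq> ball 0 r" using a e by auto
    then have "continuous_on (cball 0 (max r1' 0)) G"
      using hG holomorphic_on_imp_continuous_on holomorphic_on_subset by blast
    then have "bounded (G ` cball 0 (max r1' 0))"
      by (simp add: compact_continuous_image compact_imp_bounded)
    then obtain M where M: "M > 0" "\<forall>x\<in>G ` cball 0 (max r1' 0). norm x \<le> M"
      using bounded_pos by blast
    show "\<exists>A B. (\<forall>z. cmod z < r1' \<longrightarrow> cmod (G z) \<le> A * exp (B * cmod z powr k)) \<and>
               (\<forall>w\<in>log_sector d eps'. cmod (H w) \<le> A * exp (B * exp (k * Re w)))"
    proof (rule exI[of _ "max M A0"], rule exI[of _ B0], intro conjI allI impI ballI)
      fix z :: complex assume "cmod z < r1'"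
      then have "norm (G z) \<le> M" using M by auto
      also have "M \<le> max M A0 * 1" by simp
      also have "\<dots> \<le> max M A0 * exp (B0 * cmod z powr k)"
        using M AB by (intro mult_left_mono) auto
      finally show "cmod (G z) \<le> max M A0 * exp (B0 * cmod z powr k)" .
    next
      fix w assume "w \<in> log_sector d eps'"
      then have "norm (H w) \<le> A0 * exp (B0 * exp (k * Re w))" using AB by auto
      also have "\<dots> \<le> max M A0 * exp (B0 * exp (k * Re w))" by (intro mult_right_mono) auto
      finally show "cmod (H w) \<le> max M A0 * exp (B0 * exp (k * Re w))" .
    qed
  qed
  then show ?thesis unfolding series_in_Ok_def using e s by blast
qed

lemma series_imp_Ok: assumes "series_in_Ok k d b" shows "Ok k d b"
proof -
  obtain eps r1 G H r where e: "eps > 0" "r1 > 0" "r > 0" and I: "in_O_disc_sector k d eps r1 G H"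
    and s: "\<forall>z \<in> ball 0 r. (\<lambda>j. b j * z ^ j) sums G z"
    using assms unfolding series_in_Ok_def by blast
  define r' where "r' = min r1 r"
  have r': "r' > 0" "r' \<le> r1" "r' \<le> r" using e by (auto simp: r'_def)
  have hG: "G holomorphic_on ball 0 r'" using I r' unfolding in_O_disc_sector_def
    by (meson holomorphic_on_subset subset_ball)
  have hH: "H holomorphic_on log_sector d eps" using I unfolding in_O_disc_sector_def by blast
  have gl: "\<forall>w\<in>log_sector d eps. Re w < ln r' \<longrightarrow> H w = G (exp w)"
    using I r' unfolding in_O_disc_sector_def
    by (smt (verit, best) e(2) ln_le_cancel_iff)
  have gr: "grow k d eps H" unfolding grow_def
  proof (intro allI impI)
    fix eps' assume "eps' < eps"
    then obtain A B where AB: "\<forall>w\<in>log_sector d eps'. norm (H w) \<le> A * exp (B * exp (k * Re w))"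
      using I e unfolding in_O_disc_sector_def by blast
    show "\<exists>A\<ge>0. \<exists>B\<ge>0. \<forall>w\<in>log_sector d eps'. cmod (H w) \<le> A * exp (B * exp (k * Re w))"
    proof (rule exI[of _ "max A 0"], rule conjI, simp, rule exI[of _ "max B 0"], intro conjI ballI)
      fix w assume "w \<in> log_sector d eps'"
      then show "cmod (H w) \<le> max A 0 * exp (max B 0 * exp (k * Re w))"
        using AB bound_norm[of "exp (k * Re w)" A B] by force
    qed simp
  qed
  have s': "\<forall>z\<in>ball 0 r'. (\<lambda>j. b j * z ^ j) sums G z" using s r' by auto
  show ?thesis unfolding Ok_def using e r' hG hH gl gr s' by blast
qed

lemma log_sector_mono: "e \<le> e' \<Longrightarrow> log_sector d e \<subseteq> log_sector d e'"
  unfolding log_sector_def by auto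

lemma open_log_sector: "open (log_sector d e)"
  unfolding log_sector_def by (intro open_Collect_less continuous_intros)

lemma log_sector_eq: "log_sector d e = {w. Im w < d + e/2} \<inter> {w. Im w > d - e/2}"
  unfolding log_sector_def by (rule set_eqI) (simp only: mem_Collect_eq Int_iff abs_less_iff; linarith)

lemma convex_log_sector: "convex (log_sector d e)"
  unfolding log_sector_eq by (intro convex_Int convex_halfspace_Im_lt convex_halfspace_Im_gt)

lemma grow_mono: "grow k d e H \<Longrightarrow> e' \<le> e \<Longrightarrow> grow k d e' H"
  unfolding grow_def by auto

lemma Ok_cmult: assumes "Ok k d b" shows "Ok k d (\<lambda>j. v * b j)"
proof -
  obtain eps r G H where e: "eps > 0" "r > 0" and hG: "G holomorphic_on ball 0 r" and hH: "H holomorphic_on log_sector d eps"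
   and gl: "\<forall>w\<in>log_sector d eps. Re w < ln r \<longrightarrow> H w = G (exp w)" and gr: "grow k d eps H"
   and s: "\<forall>z\<in>ball 0 r. (\<lambda>j. b j * z ^ j) sums G z"
    using assms unfolding Ok_def by blast
  have hG': "(\<lambda>z. v * G z) holomorphic_on ball 0 r" using hG by (intro holomorphic_intros)
  have hH': "(\<lambda>z. v * H z) holomorphic_on log_sector d eps" using hH by (intro holomorphic_intros)
  have gl': "\<forall>w\<in>log_sector d eps. Re w < ln r \<longrightarrow> v * H w = v * G (exp w)" using gl by auto
  have s': "\<forall>z\<in>ball 0 r. (\<lambda>j. v * b j * z ^ j) sums (v * G z)"
    using s by (auto simp: mult.assoc intro: sums_mult)
  have gr': "grow k d eps (\<lambda>z. v * H z)" unfolding grow_def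
  proof (intro allI impI)
    fix eps' assume "eps' < eps"
    then obtain A B where AB: "A \<ge> 0" "B \<ge> 0" "\<forall>w\<in>log_sector d eps'. norm (H w) \<le> A * exp (B * exp (k * Re w))"
      using gr unfolding grow_def by blast
    show "\<exists>A\<ge>0. \<exists>B\<ge>0. \<forall>w\<in>log_sector d eps'. cmod (v * H w) \<le> A * exp (B * exp (k * Re w))"
    proof (rule exI[of _ "norm v * A"], rule conjI, simp add: AB, rule exI[of _ B], intro conjI ballI)
      fix w assume "w \<in> log_sector d eps'"
      then show "cmod (v * H w) \<le> norm v * A * exp (B * exp (k * Re w))"
        using AB by (auto simp: norm_mult mult.assoc intro: mult_left_mono)
    qed (simp add: AB)
  qed
  show ?thesis unfolding Ok_def using e hG' hH' gl' gr' s' by blast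
qed

lemma Ok_add: assumes "Ok k d b1" "Ok k d b2" shows "Ok k d (\<lambda>j. b1 j + b2 j)"
proof -
  obtain eps1 r1 G1 H1 where e1: "eps1 > 0" "r1 > 0" and hG1: "G1 holomorphic_on ball 0 r1" and hH1: "H1 holomorphic_on log_sector d eps1"
   and gl1: "\<forall>w\<in>log_sector d eps1. Re w < ln r1 \<longrightarrow> H1 w = G1 (exp w)" and gr1: "grow k d eps1 H1"
   and s1: "\<forall>z\<in>ball 0 r1. (\<lambda>j. b1 j * z ^ j) sums G1 z"
    using assms(1) unfolding Ok_def by blast
  obtain eps2 r2 G2 H2 where e2: "eps2 > 0" "r2 > 0" and hG2: "G2 holomorphic_on ball 0 r2" and hH2: "H2 holomorphic_on log_sector d eps2"
   and gl2: "\<forall>w\<in>log_sector d eps2. Re w < ln r2 \<longrightarrow> H2 w = G2 (exp w)" and gr2: "grow k d eps2 H2"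
   and s2: "\<forall>z\<in>ball 0 r2. (\<lambda>j. b2 j * z ^ j) sums G2 z"
    using assms(2) unfolding Ok_def by blast
  define eps where "eps = min eps1 eps2"
  define r where "r = min r1 r2"
  have e: "eps > 0" "r > 0" using e1 e2 by (auto simp: eps_def r_def)
  have sub1: "log_sector d eps \<subseteq> log_sector d eps1" "log_sector d eps \<subseteq> log_sector d eps2"
    by (rule log_sector_mono, simp add: eps_def)+
  have "ball 0 r \<subseteq> ball 0 r1" "ball 0 r \<subseteq> ball 0 r2" by (auto simp: r_def)
  then have hG: "(\<lambda>z. G1 z + G2 z) holomorphic_on ball 0 r"
    using hG1 hG2 by (intro holomorphic_intros) (auto intro: holomorphic_on_subset)
  have hH: "(\<lambda>z. H1 z + H2 z) holomorphic_on log_sector d eps"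
    using hH1 hH2 sub1 by (intro holomorphic_intros) (auto intro: holomorphic_on_subset)
  have gl: "\<forall>w\<in>log_sector d eps. Re w < ln r \<longrightarrow> H1 w + H2 w = G1 (exp w) + G2 (exp w)"
  proof (intro ballI impI)
    fix w assume w: "w \<in> log_sector d eps" "Re w < ln r"
    have "ln r \<le> ln r1" "ln r \<le> ln r2" using e1 e2 e by (auto simp: r_def)
    then show "H1 w + H2 w = G1 (exp w) + G2 (exp w)" using w gl1 gl2 sub1 by force
  qed
  have s: "\<forall>z\<in>ball 0 r. (\<lambda>j. (b1 j + b2 j) * z ^ j) sums (G1 z + G2 z)"
    using s1 s2 by (auto simp: r_def distrib_right intro: sums_add)
  have gr: "grow k d eps (\<lambda>z. H1 z + H2 z)" unfolding grow_def
  proof (intro allI impI)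
    fix eps' assume "eps' < eps"
    then have "eps' < eps1" "eps' < eps2" by (auto simp: eps_def)
    then obtain A1 B1 A2 B2 where AB: "A1 \<ge> 0" "B1 \<ge> 0" "\<forall>w\<in>log_sector d eps'. norm (H1 w) \<le> A1 * exp (B1 * exp (k * Re w))"
      "A2 \<ge> 0" "B2 \<ge> 0" "\<forall>w\<in>log_sector d eps'. norm (H2 w) \<le> A2 * exp (B2 * exp (k * Re w))"
      using gr1 gr2 unfolding grow_def by meson
    show "\<exists>A\<ge>0. \<exists>B\<ge>0. \<forall>w\<in>log_sector d eps'. cmod (H1 w + H2 w) \<le> A * exp (B * exp (k * Re w))"
    proof (rule exI[of _ "A1 + A2"], rule conjI, simp add: AB, rule exI[of _ "max B1 B2"], intro conjI ballI)
      fix w assume w: "w \<in> log_sector d eps'"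
      have "exp (B1 * exp (k * Re w)) \<le> exp (max B1 B2 * exp (k * Re w))"
           "exp (B2 * exp (k * Re w)) \<le> exp (max B1 B2 * exp (k * Re w))"
        by (auto intro: mult_right_mono)
      then have "A1 * exp (B1 * exp (k * Re w)) \<le> A1 * exp (max B1 B2 * exp (k * Re w))"
        "A2 * exp (B2 * exp (k * Re w)) \<le> A2 * exp (max B1 B2 * exp (k * Re w))"
        using AB by (auto intro: mult_left_mono)
      moreover have "cmod (H1 w + H2 w) \<le> norm (H1 w) + norm (H2 w)" by (rule norm_triangle_ineq)
      ultimately show "cmod (H1 w + H2 w) \<le> (A1 + A2) * exp (max B1 B2 * exp (k * Re w))"
        using AB w by (simp add: distrib_right) (smt (verit, best))
    qed (simp add: AB le_max_iff_disj)
  qed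
  show ?thesis unfolding Ok_def using e hG hH gl gr s by blast
qed

lemma pow_le_fact_exp: assumes "(u::real) \<ge> 0" shows "u ^ n \<le> fact n * exp u"
proof -
  have s: "summable (\<lambda>i. u ^ i /\<^sub>R fact i)" using exp_converges[of u] sums_summable by blast
  have "sum (\<lambda>i. u ^ i /\<^sub>R fact i) {n} \<le> suminf (\<lambda>i. u ^ i /\<^sub>R fact i)"
    by (rule sum_le_suminf[OF s]) (use assms in auto)
  also have "\<dots> = exp u" using exp_converges[of u] sums_unique by metis
  finally have "u ^ n / fact n \<le> exp u" by (simp add: divide_inverse mult.commute)
  then show ?thesis by (simp add: divide_le_eq mult.commute)
qed

lemma exp_growth: assumes "k > 0" "(g::real) \<ge> 0" shows "\<exists>A\<ge>0. \<forall>x::real. exp (g * x) \<le> A * exp (exp (k * x))"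
proof -
  define n where "n = nat \<lceil>g / k\<rceil>"
  have "g / k \<le> of_int \<lceil>g / k\<rceil>" by (rule le_of_int_ceiling)
  also have "\<dots> \<le> real n" unfolding n_def by linarith
  finally have "g / k \<le> real n" .
  then have gn: "g \<le> k * real n" using assms by (simp add: divide_le_eq mult.commute)
  show ?thesis
  proof (rule exI[of _ "fact n"], intro conjI allI)
    fix x :: real
    show "exp (g * x) \<le> fact n * exp (exp (k * x))"
    proof (cases "x \<le> 0")
      case True
      have "exp (g * x) \<le> 1" using True assms by (simp add: mult_nonneg_nonpos)
      also have "(1::real) = 1 * 1" by simp
      also have "\<dots> \<le> fact n * exp (exp (k*x))" by (intro mult_mono) auto
      finally show ?thesis .
    next
      case False
      have "exp (g * x) \<le> exp (k * real n * x)" using False gn by (simp add: mult_right_mono)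
      also have "\<dots> = exp (k * x) ^ n" by (simp add: exp_of_nat_mult[symmetric] algebra_simps)
      also have "\<dots> \<le> fact n * exp (exp (k*x))" by (rule pow_le_fact_exp) simp
      finally show ?thesis .
    qed
  qed simp
qed

lemma Ok_monomial: assumes "k > 0" shows "Ok k d (\<lambda>j. if j = n then v else 0)"
proof -
  define G where "G = (\<lambda>z::complex. v * z ^ n)"
  define H where "H = (\<lambda>w::complex. v * exp (of_nat n * w))"
  have hG: "G holomorphic_on ball 0 1" unfolding G_def by (intro holomorphic_intros)
  have hH: "H holomorphic_on log_sector d 1" unfolding H_def by (intro holomorphic_intros)
  have gl: "\<forall>w\<in>log_sector d 1. Re w < ln 1 \<longrightarrow> H w = G (exp w)"
    unfolding G_def H_def by (simp add: exp_of_nat_mult)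
  have s: "\<forall>z\<in>ball 0 1. (\<lambda>j. (if j = n then v else 0) * z ^ j) sums G z"
  proof
    fix z :: complex
    have "(\<lambda>j. (if j = n then v else 0) * z ^ j) = (\<lambda>j. if j = n then v * z ^ j else 0)" by auto
    then show "(\<lambda>j. (if j = n then v else 0) * z ^ j) sums G z" unfolding G_def using sums_single[of n "\<lambda>j. v * z ^ j"] by simp
  qed
  obtain A where A: "A \<ge> 0" "\<forall>x::real. exp (real n * x) \<le> A * exp (exp (k * x))"
    using exp_growth[OF assms, of "real n"] by auto
  have gr: "grow k d 1 H" unfolding grow_def
  proof (intro allI impI)
    fix eps' :: real
    show "\<exists>A\<ge>0. \<exists>B\<ge>0. \<forall>w\<in>log_sector d eps'. cmod (H w) \<le> A * exp (B * exp (k * Re w))"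
    proof (rule exI[of _ "norm v * A"], rule conjI, simp add: A, rule exI[of _ 1], intro conjI ballI)
      fix w assume "w \<in> log_sector d eps'"
      have "cmod (H w) = norm v * exp (real n * Re w)" unfolding H_def by (simp add: norm_mult)
      also have "\<dots> \<le> norm v * (A * exp (exp (k * Re w)))" using A by (intro mult_left_mono) auto
      finally show "cmod (H w) \<le> norm v * A * exp (1 * exp (k * Re w))" by (simp add: mult.assoc)
    qed simp
  qed
  have one: "(0::real) < 1" by simp
  show ?thesis unfolding Ok_def using hG hH gl gr s one by blast
qed

lemma Ok_finmod: assumes "k > 0" "finite S" "Ok k d b" "\<forall>j. j \<notin> S \<longrightarrow> b' j = b j" shows "Ok k d b'"
  using assms(2,4)
proof (induction S arbitrary: b' rule: finite_induct)
  case empty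
  then have "b' = b" by auto
  then show ?case using assms(3) by simp
next
  case (insert n S)
  define b'' where "b'' = b'(n := b n)"
  have "Ok k d b''" using insert.IH insert.prems unfolding b''_def by auto
  then have "Ok k d (\<lambda>j. b'' j + (if j = n then b' n - b n else 0))"
    by (intro Ok_add Ok_monomial assms(1))
  moreover have "(\<lambda>j. b'' j + (if j = n then b' n - b n else 0)) = b'" unfolding b''_def by auto
  ultimately show ?case by simp
qed

lemma Ok_scale: assumes "l > 0" "Ok k d b" shows "Ok k d (\<lambda>j. b j * complex_of_real l ^ j)"
proof -
  obtain eps r G H where e: "eps > 0" "r > 0" and hG: "G holomorphic_on ball 0 r" and hH: "H holomorphic_on log_sector d eps"
   and gl: "\<forall>w\<in>log_sector d eps. Re w < ln r \<longrightarrow> H w = G (exp w)" and gr: "grow k d eps H"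
   and s: "\<forall>z\<in>ball 0 r. (\<lambda>j. b j * z ^ j) sums G z"
    using assms(2) unfolding Ok_def by blast
  define G' where "G' = (\<lambda>z. G (of_real l * z))"
  define H' where "H' = (\<lambda>w. H (w + of_real (ln l)))"
  have r': "r / l > 0" using e assms by simp
  have mapG: "(\<lambda>z::complex. of_real l * z) ` ball 0 (r/l) \<subseteq> ball 0 r"
  proof (rule image_subsetI)
    fix z :: complex assume "z \<in> ball 0 (r / l)"
    then have "l * norm z < r" using assms by (simp add: field_simps dist_norm)
    then show "complex_of_real l * z \<in> ball 0 r" using assms by (simp add: norm_mult dist_norm)
  qed
  have hG': "G' holomorphic_on ball 0 (r/l)" unfolding G'_def
    by (rule holomorphic_on_compose_gen[OF _ hG mapG, unfolded o_def]) (intro holomorphic_intros)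
  have mapH: "(\<lambda>w. w + of_real (ln l)) ` log_sector d eps \<subseteq> log_sector d eps"
    by (auto simp: log_sector_def)
  have hH': "H' holomorphic_on log_sector d eps" unfolding H'_def
    by (rule holomorphic_on_compose_gen[OF _ hH mapH, unfolded o_def]) (intro holomorphic_intros)
  have gl': "\<forall>w\<in>log_sector d eps. Re w < ln (r/l) \<longrightarrow> H' w = G' (exp w)"
  proof (intro ballI impI)
    fix w assume w: "w \<in> log_sector d eps" "Re w < ln (r/l)"
    have "w + of_real (ln l) \<in> log_sector d eps" using w mapH by auto
    moreover have "Re (w + of_real (ln l)) < ln r" using w assms e by (simp add: ln_div)
    ultimately have "H' w = G (exp (w + of_real (ln l)))" unfolding H'_def using gl by auto
    also have "exp (w + of_real (ln l)) = of_real l * exp w"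
      using assms by (simp add: exp_add exp_of_real mult.commute)
    finally show "H' w = G' (exp w)" unfolding G'_def .
  qed
  have s': "\<forall>z\<in>ball 0 (r/l). (\<lambda>j. b j * complex_of_real l ^ j * z ^ j) sums G' z"
  proof
    fix z :: complex assume "z \<in> ball 0 (r/l)"
    then have "of_real l * z \<in> ball 0 r" using mapG by blast
    then have "(\<lambda>j. b j * (of_real l * z) ^ j) sums G' z" unfolding G'_def using s by auto
    then show "(\<lambda>j. b j * complex_of_real l ^ j * z ^ j) sums G' z" by (simp add: power_mult_distrib mult.assoc)
  qed
  have gr': "grow k d eps H'" unfolding grow_def
  proof (intro allI impI)
    fix eps' assume "eps' < eps"
    then obtain A B where AB: "A \<ge> 0" "B \<ge> 0" "\<forall>w\<in>log_sector d eps'. norm (H w) \<le> A * exp (B * exp (k * Re w))"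
      using gr unfolding grow_def by blast
    show "\<exists>A\<ge>0. \<exists>B\<ge>0. \<forall>w\<in>log_sector d eps'. cmod (H' w) \<le> A * exp (B * exp (k * Re w))"
    proof (rule exI[of _ A], rule conjI, simp add: AB, rule exI[of _ "B * exp (k * ln l)"], intro conjI ballI)
      fix w assume w: "w \<in> log_sector d eps'"
      then have "w + of_real (ln l) \<in> log_sector d eps'" by (auto simp: log_sector_def)
      then have "norm (H' w) \<le> A * exp (B * exp (k * Re (w + of_real (ln l))))" unfolding H'_def using AB by auto
      also have "exp (k * Re (w + of_real (ln l))) = exp (k * ln l) * exp (k * Re w)"
        by (simp add: distrib_left exp_add)
      finally show "cmod (H' w) \<le> A * exp (B * exp (k * ln l) * exp (k * Re w))" by (simp add: mult.assoc)
    qed (simp add: AB)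
  qed
  show ?thesis unfolding Ok_def using e r' hG' hH' gl' gr' s' by blast
qed

lemma series_deriv:
  fixes b :: "nat \<Rightarrow> complex" and z :: complex
  assumes s: "\<forall>z\<in>ball 0 r. (\<lambda>j. b j * z ^ j) sums G z" and z: "z \<in> ball 0 r"
  shows "(G has_field_derivative (\<Sum>n. diffs b n * z^n)) (at z)"
    and "(\<lambda>n. diffs b n * z^n) sums (\<Sum>n. diffs b n * z^n)"
proof -
  have sm: "summable (\<lambda>n. b n * x ^ n)" if "norm x < r" for x :: complex
  proof -
    have "x \<in> ball 0 r" using that by (simp add: dist_norm)
    then have "(\<lambda>j. b j * x ^ j) sums G x" using s by blast
    then show ?thesis by (rule sums_summable)
  qed
  have nz: "norm z < r" using z by (simp add: dist_norm)
  have "((\<lambda>z. \<Sum>n. b n * z^n) has_field_derivative (\<Sum>n. diffs b n * z^n)) (at z)"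
    by (rule termdiffs_strong'[OF sm nz])
  then show "(G has_field_derivative (\<Sum>n. diffs b n * z^n)) (at z)"
  proof (rule has_field_derivative_transform_within_open[OF _ open_ball z])
    fix x assume "x \<in> ball (0::complex) r"
    then have "(\<lambda>j. b j * x ^ j) sums G x" using s by blast
    then show "(\<Sum>n. b n * x ^ n) = G x" by (rule sums_unique[symmetric])
  qed
  show "(\<lambda>n. diffs b n * z^n) sums (\<Sum>n. diffs b n * z^n)"
    by (rule summable_sums[OF termdiff_converges[OF nz sm]])
qed

lemma theta_series:
  fixes b :: "nat \<Rightarrow> complex" and z :: complex
  assumes s: "\<forall>z\<in>ball 0 r. (\<lambda>j. b j * z ^ j) sums G z" and z: "z \<in> ball 0 r"
  shows "(\<lambda>j. of_nat j * b j * z^j) sums (z * deriv G z)"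
proof -
  have d: "deriv G z = (\<Sum>n. diffs b n * z^n)" using series_deriv(1)[OF s z] by (rule DERIV_imp_deriv)
  have "(\<lambda>n. z * (diffs b n * z^n)) sums (z * deriv G z)" unfolding d
    by (rule sums_mult[OF series_deriv(2)[OF s z]])
  moreover have "(\<lambda>n. z * (diffs b n * z^n)) = (\<lambda>n. of_nat (Suc n) * b (Suc n) * z ^ Suc n)"
    by (simp add: diffs_def fun_eq_iff mult_ac)
  ultimately have "(\<lambda>n. (\<lambda>j. of_nat j * b j * z^j) (Suc n)) sums (z * deriv G z)"
    by simp
  then have "(\<lambda>j. of_nat j * b j * z^j) sums (z * deriv G z + (\<lambda>j. of_nat j * b j * z^j) 0)"
    by (rule iffD1[OF sums_Suc_iff])
  then show ?thesis by simp
qed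

lemma Ok_theta: assumes "Ok k d b" and kpos: "k > 0" shows "Ok k d (\<lambda>j. of_nat j * b j)"
proof -
  obtain eps r G H where e: "eps > 0" "r > 0" and hG: "G holomorphic_on ball 0 r" and hH: "H holomorphic_on log_sector d eps"
   and gl: "\<forall>w\<in>log_sector d eps. Re w < ln r \<longrightarrow> H w = G (exp w)" and gr: "grow k d eps H"
   and s: "\<forall>z\<in>ball 0 r. (\<lambda>j. b j * z ^ j) sums G z"
    using assms unfolding Ok_def by blast
  define G' where "G' = (\<lambda>z. z * deriv G z)"
  define H' where "H' = deriv H"
  have hG': "G' holomorphic_on ball 0 r" unfolding G'_def using hG by (intro holomorphic_intros) auto
  have hH': "H' holomorphic_on log_sector d eps" unfolding H'_def using hH open_log_sector by (intro holomorphic_intros) auto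
  have s': "\<forall>z\<in>ball 0 r. (\<lambda>j. of_nat j * b j * z ^ j) sums G' z"
    unfolding G'_def using theta_series[OF s] by blast
  have gl': "\<forall>w\<in>log_sector d eps. Re w < ln r \<longrightarrow> H' w = G' (exp w)"
  proof (intro ballI impI)
    fix w assume w: "w \<in> log_sector d eps" "Re w < ln r"
    define U where "U = log_sector d eps \<inter> {w. Re w < ln r}"
    have U: "open U" "w \<in> U" unfolding U_def using w open_log_sector
      by (auto intro!: open_Int open_Collect_less continuous_intros)
    have ew: "exp w \<in> ball 0 r" using w e by (simp add: dist_norm ln_less_cancel_iff[symmetric] del: ln_less_cancel_iff)
    have dG: "(G has_field_derivative deriv G (exp w)) (at (exp w))"
      using hG ew by (rule holomorphic_derivI[OF _ open_ball])
    have "((\<lambda>w. G (exp w)) has_field_derivative deriv G (exp w) * exp w) (at w)"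
      using DERIV_chain2[OF dG DERIV_exp] by simp
    then have "(H has_field_derivative deriv G (exp w) * exp w) (at w)"
    proof (rule has_field_derivative_transform_within_open[OF _ U])
      fix x assume "x \<in> U" then show "G (exp x) = H x" using gl unfolding U_def by auto
    qed
    then show "H' w = G' (exp w)" unfolding H'_def G'_def by (simp add: DERIV_imp_deriv mult.commute)
  qed
  have gr': "grow k d eps H'" unfolding grow_def
  proof (intro allI impI)
    fix eps' assume eps': "eps' < eps"
    define eps'' where "eps'' = (eps + eps') / 2"
    define \<delta> where "\<delta> = (eps - eps') / 4"
    have dpos: "\<delta> > 0" and e'': "eps'' < eps" using eps' by (auto simp: \<delta>_def eps''_def)
    obtain A B where AB: "A \<ge> 0" "B \<ge> 0" "\<forall>w\<in>log_sector d eps''. norm (H w) \<le> A * exp (B * exp (k * Re w))"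
      using gr e'' unfolding grow_def by blast
    have p1: "(A + 1) / \<delta> \<ge> 0" "B * exp (k * \<delta>) \<ge> 0" using AB dpos by auto
    have bnd: "\<forall>w\<in>log_sector d eps'. cmod (H' w) \<le> (A + 1) / \<delta> * exp (B * exp (k * \<delta>) * exp (k * Re w))"
    proof
      fix w assume w: "w \<in> log_sector d eps'"
      have cb: "cball w \<delta> \<subseteq> log_sector d eps''"
      proof
        fix s assume "s \<in> cball w \<delta>"
        then have "norm (s - w) \<le> \<delta>" by (simp add: dist_norm norm_minus_commute)
        then have "\<bar>Im s - Im w\<bar> \<le> \<delta>" using abs_Im_le_cmod[of "s - w"] by simp
        moreover have "\<bar>Im s - d\<bar> \<le> \<bar>Im s - Im w\<bar> + \<bar>Im w - d\<bar>" by linarith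
        ultimately show "s \<in> log_sector d eps''" using w unfolding log_sector_def \<delta>_def eps''_def by simp
      qed
      have sub: "log_sector d eps'' \<subseteq> log_sector d eps" using e'' by (rule log_sector_mono[OF less_imp_le])
      define B0 where "B0 = A * exp (B * exp (k * (Re w + \<delta>))) + 1"
      have "norm ((deriv ^^ 1) H w) \<le> fact 1 * B0 / \<delta> ^ 1"
      proof (rule Cauchy_higher_deriv_bound)
        show "H holomorphic_on ball w \<delta>" using hH cb sub ball_subset_cball by (blast intro: holomorphic_on_subset)
        have cbs: "cball w \<delta> \<subseteq> log_sector d eps" using cb sub by (rule order_trans)
        show "continuous_on (cball w \<delta>) H"
          by (rule holomorphic_on_imp_continuous_on[OF holomorphic_on_subset[OF hH cbs]])
        fix s assume s: "s \<in> ball w \<delta>"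
        then have sl: "s \<in> log_sector d eps''" using cb by auto
        have "norm (s - w) < \<delta>" using s by (simp add: dist_norm norm_minus_commute)
        then have "Re s \<le> Re w + \<delta>" using abs_Re_le_cmod[of "s - w"] by simp
        then have "k * Re s \<le> k * (Re w + \<delta>)" using kpos by (simp add: mult_left_mono)
        then have "exp (k * Re s) \<le> exp (k * (Re w + \<delta>))" by simp
        then have "B * exp (k * Re s) \<le> B * exp (k * (Re w + \<delta>))" using AB(2) by (rule mult_left_mono)
        then have "exp (B * exp (k * Re s)) \<le> exp (B * exp (k * (Re w + \<delta>)))" by simp
        then have "A * exp (B * exp (k * Re s)) \<le> A * exp (B * exp (k * (Re w + \<delta>)))" using AB(1) by (rule mult_left_mono)
        moreover have "norm (H s) \<le> A * exp (B * exp (k * Re s))" using AB sl by blast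
        ultimately have "norm (H s) \<le> A * exp (B * exp (k * (Re w + \<delta>)))" by linarith
        then show "H s \<in> ball 0 B0" unfolding B0_def by (simp add: dist_norm)
      qed (use dpos in auto)
      then have "norm (H' w) \<le> B0 / \<delta>" unfolding H'_def by simp
      also have "B0 \<le> (A + 1) * exp (B * exp (k * \<delta>) * exp (k * Re w))"
      proof -
        have "exp (k * (Re w + \<delta>)) = exp (k * \<delta>) * exp (k * Re w)" by (simp add: distrib_left exp_add mult.commute)
        then have "B0 = A * exp (B * exp (k * \<delta>) * exp (k * Re w)) + 1" unfolding B0_def by (simp add: mult.assoc)
        also have "\<dots> \<le> A * exp (B * exp (k * \<delta>) * exp (k * Re w)) + 1 * exp (B * exp (k * \<delta>) * exp (k * Re w))"
          using AB by simp
        finally show ?thesis by (simp add: distrib_right)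
      qed
      then have "B0 / \<delta> \<le> (A + 1) * exp (B * exp (k * \<delta>) * exp (k * Re w)) / \<delta>" using dpos by (simp add: divide_right_mono)
      finally show "cmod (H' w) \<le> (A + 1) / \<delta> * exp (B * exp (k * \<delta>) * exp (k * Re w))" by simp
    qed
    show "\<exists>A\<ge>0. \<exists>B\<ge>0. \<forall>w\<in>log_sector d eps'. cmod (H' w) \<le> A * exp (B * exp (k * Re w))"
      using bnd p1 by blast
  qed
  show ?thesis unfolding Ok_def using e hG' hH' gl' gr' s' by blast
qed

lemma div_coeff: assumes "\<forall>j. of_nat j = \<alpha> \<longrightarrow> b j = 0"
  shows "(of_nat j - \<alpha>) * (b j / (of_nat j - \<alpha>)) = (b j :: complex)"
proof (cases "of_nat j = \<alpha>")
  case True then show ?thesis using assms by simp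
next
  case False then show ?thesis by simp
qed

lemma div_disc:
  fixes b :: "nat \<Rightarrow> complex"
  assumes s: "\<forall>z\<in>ball 0 r. (\<lambda>j. b j * z ^ j) sums G z" and zero: "\<forall>j. of_nat j = \<alpha> \<longrightarrow> b j = 0"
  shows "\<exists>G'. G' holomorphic_on ball 0 r \<and> (\<forall>z\<in>ball 0 r. (\<lambda>j. b j / (of_nat j - \<alpha>) * z ^ j) sums G' z) \<and>
           (\<forall>z\<in>ball 0 r. z * deriv G' z - \<alpha> * G' z = G z)"
proof -
  define c where "c = (\<lambda>j. b j / (of_nat j - \<alpha>))"
  have summ: "summable (\<lambda>j. c j * z ^ j)" if z: "z \<in> ball 0 r" for z
  proof -
    define \<rho> where "\<rho> = (norm z + r) / 2"
    have nz: "norm z < r" using z by (simp add: dist_norm)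
    have nn: "0 \<le> norm z" by simp
    have aux: "\<And>a::real. a < r \<Longrightarrow> 0 \<le> a \<Longrightarrow> 0 \<le> (a + r) / 2"
      "\<And>a::real. a < r \<Longrightarrow> 0 \<le> a \<Longrightarrow> (a + r) / 2 < r"
      "\<And>a::real. a < r \<Longrightarrow> 0 \<le> a \<Longrightarrow> a < (a + r) / 2" by (simp_all add: field_simps)
    have rho1: "0 \<le> \<rho>" unfolding \<rho>_def using aux(1)[OF nz nn] .
    have rho2: "\<rho> < r" unfolding \<rho>_def using aux(2)[OF nz nn] .
    have rho3: "norm z < \<rho>" unfolding \<rho>_def using aux(3)[OF nz nn] .
    note rho = rho1 rho2 rho3
    have "complex_of_real \<rho> \<in> ball 0 r" using rho by (simp add: dist_norm)
    then have "(\<lambda>j. b j * complex_of_real \<rho> ^ j) sums G (complex_of_real \<rho>)" using s by blast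
    then have sm: "summable (\<lambda>j. b j * complex_of_real \<rho> ^ j)" by (rule sums_summable)
    have "norm z < norm (complex_of_real \<rho>)" using rho by simp
    then have an: "summable (\<lambda>n. norm (b n * z ^ n))" by (rule powser_insidea[OF sm])
    define N where "N = nat \<lceil>norm \<alpha>\<rceil> + 1"
    show ?thesis
    proof (rule summable_comparison_test'[OF an])
      fix n assume n: "N \<le> n"
      have "norm \<alpha> + 1 \<le> real n" using n unfolding N_def by linarith
      moreover have "norm (of_nat n :: complex) - norm \<alpha> \<le> norm (of_nat n - \<alpha>)" by (rule norm_triangle_ineq2)
      ultimately have ge1: "1 \<le> norm (of_nat n - \<alpha>)" by simp
      have "norm (c n * z ^ n) = norm (b n) / norm (of_nat n - \<alpha>) * norm z ^ n"
        unfolding c_def by (simp add: norm_mult norm_divide norm_power)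
      also have "\<dots> \<le> norm (b n) * norm z ^ n"
      proof -
        have "norm (b n) / norm (of_nat n - \<alpha>) \<le> norm (b n) / 1"
          by (rule divide_left_mono[OF ge1 norm_ge_zero]) (use ge1 in \<open>auto intro: mult_pos_pos\<close>)
        then have "norm (b n) / norm (of_nat n - \<alpha>) \<le> norm (b n)" by simp
        then show ?thesis by (rule mult_right_mono) simp
      qed
      finally show "norm (c n * z ^ n) \<le> norm (b n * z ^ n)" by (simp add: norm_mult norm_power)
    qed
  qed
  define G' where "G' = (\<lambda>z. \<Sum>j. c j * z ^ j)"
  have s': "\<forall>z\<in>ball 0 r. (\<lambda>j. c j * z ^ j) sums G' z"
  proof
    fix z :: complex assume "z \<in> ball 0 r"
    then show "(\<lambda>j. c j * z ^ j) sums G' z" unfolding G'_def by (rule summable_sums[OF summ])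
  qed
  have hol: "G' holomorphic_on ball 0 r"
    unfolding holomorphic_on_open[OF open_ball]
  proof
    fix x :: complex assume "x \<in> ball 0 r"
    show "\<exists>f'. (G' has_field_derivative f') (at x)" by (rule exI, rule series_deriv(1)[OF s' \<open>x \<in> ball 0 r\<close>])
  qed
  have ode: "z * deriv G' z - \<alpha> * G' z = G z" if z: "z \<in> ball 0 r" for z
  proof -
    have t1: "(\<lambda>j. of_nat j * c j * z^j) sums (z * deriv G' z)" by (rule theta_series[OF s' z])
    have "(\<lambda>j. c j * z^j) sums G' z" using s' z by blast
    then have t2: "(\<lambda>j. \<alpha> * (c j * z^j)) sums (\<alpha> * G' z)" by (rule sums_mult)
    have "(\<lambda>j. of_nat j * c j * z^j - \<alpha> * (c j * z^j)) sums (z * deriv G' z - \<alpha> * G' z)"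
      by (rule sums_diff[OF t1 t2])
    moreover have "(\<lambda>j. of_nat j * c j * z^j - \<alpha> * (c j * z^j)) = (\<lambda>j. b j * z ^ j)"
    proof
      fix j
      have "of_nat j * c j * z^j - \<alpha> * (c j * z^j) = ((of_nat j - \<alpha>) * c j) * z ^ j" by (simp add: algebra_simps)
      also have "(of_nat j - \<alpha>) * c j = b j" unfolding c_def by (rule div_coeff[OF zero])
      finally show "of_nat j * c j * z^j - \<alpha> * (c j * z^j) = b j * z ^ j" .
    qed
    ultimately have "(\<lambda>j. b j * z ^ j) sums (z * deriv G' z - \<alpha> * G' z)" by simp
    moreover have "(\<lambda>j. b j * z ^ j) sums G z" using s z by blast
    ultimately show ?thesis by (rule sums_unique2)
  qed
  show ?thesis
  proof (rule exI[of _ G'], intro conjI)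
    show "G' holomorphic_on ball 0 r" by (rule hol)
    show "\<forall>z\<in>ball 0 r. (\<lambda>j. b j / (of_nat j - \<alpha>) * z ^ j) sums G' z" using s' unfolding c_def .
    show "\<forall>z\<in>ball 0 r. z * deriv G' z - \<alpha> * G' z = G z" using ode by blast
  qed
qed

lemma real_bound:
  fixes na T x0 x A M0 B Ag k :: real
  assumes na: "na \<ge> 0" and T: "T \<ge> 0" and x: "x0 < x" and A: "A \<ge> 0" and M0: "M0 \<ge> 0" and B: "B \<ge> 0"
    and Ag: "exp ((2*na+1) * x) \<le> Ag * exp (exp (k * x))"
  shows "exp (na*(\<bar>x\<bar>+T)) * (exp (na*(\<bar>x0\<bar>+\<bar>x\<bar>+T)) * A * exp (B * exp (k*x)) * (x - x0) + exp (na*(\<bar>x0\<bar>+T)) * M0)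
     \<le> ((A + M0) * exp (6*na*\<bar>x0\<bar> + 2*na*T + \<bar>x0\<bar>) * Ag) * exp ((B+1) * exp (k*x))"
proof -
  define u where "u = exp (k*x)"
  define V where "V = exp (B * u)"
  define E where "E = exp (na*(\<bar>x0\<bar>+\<bar>x\<bar>+T))"
  have V1: "V \<ge> 1" unfolding V_def u_def using B by simp
  have E0: "E \<ge> 0" unfolding E_def by simp
  have e1: "exp (na*(\<bar>x\<bar>+T)) \<le> E" unfolding E_def using na by (simp add: mult_left_mono)
  have e2: "exp (na*(\<bar>x0\<bar>+T)) \<le> E" unfolding E_def using na by (simp add: mult_left_mono)
  have xx: "x - x0 \<ge> 0" using x by simp
  have inner: "exp (na*(\<bar>x0\<bar>+\<bar>x\<bar>+T)) * A * V * (x - x0) + exp (na*(\<bar>x0\<bar>+T)) * M0 \<le> E * ((A + M0) * (x - x0 + 1) * V)"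
  proof -
    have "exp (na*(\<bar>x0\<bar>+T)) * M0 \<le> E * M0" using e2 M0 by (rule mult_right_mono)
    moreover have "E * M0 \<le> E * (M0 * V)"
    proof -
      have "M0 * 1 \<le> M0 * V" by (rule mult_left_mono[OF V1 M0])
      then show ?thesis using E0 by (simp add: mult_left_mono)
    qed
    moreover have "A * V * (x - x0) + M0 * V \<le> (A + M0) * (x - x0 + 1) * V"
    proof -
      have "(A + M0) * (x - x0 + 1) * V = A * V * (x - x0) + M0 * V + (A * V + M0 * V * (x - x0))" by (simp add: algebra_simps)
      moreover have "A * V + M0 * V * (x - x0) \<ge> 0" using A M0 V1 xx by simp
      ultimately show ?thesis by linarith
    qed
    then have "E * (A * V * (x - x0) + M0 * V) \<le> E * ((A + M0) * (x - x0 + 1) * V)" using E0 by (rule mult_left_mono)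
    ultimately show ?thesis unfolding E_def[symmetric] by (simp add: algebra_simps)
  qed
  have pos_inner: "0 \<le> exp (na*(\<bar>x0\<bar>+\<bar>x\<bar>+T)) * A * V * (x - x0) + exp (na*(\<bar>x0\<bar>+T)) * M0"
    using A M0 V1 xx by simp
  have "exp (na*(\<bar>x\<bar>+T)) * (exp (na*(\<bar>x0\<bar>+\<bar>x\<bar>+T)) * A * V * (x - x0) + exp (na*(\<bar>x0\<bar>+T)) * M0)
        \<le> E * (E * ((A + M0) * (x - x0 + 1) * V))"
    by (rule mult_mono[OF e1 inner E0 pos_inner])
  also have "\<dots> = (A + M0) * V * (E * E * (x - x0 + 1))" by (simp add: algebra_simps)
  also have "E * E * (x - x0 + 1) \<le> exp (6*na*\<bar>x0\<bar> + 2*na*T + \<bar>x0\<bar>) * Ag * exp u"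
  proof -
    have "x - x0 + 1 \<le> exp (x - x0)" using exp_ge_add_one_self[of "x - x0"] by (simp add: add.commute)
    then have "E * E * (x - x0 + 1) \<le> E * E * exp (x - x0)" using E0 by (simp add: mult_left_mono)
    also have "E * E * exp (x - x0) = exp (2*na*(\<bar>x0\<bar>+\<bar>x\<bar>+T) + (x - x0))" unfolding E_def
      by (simp add: exp_add[symmetric] algebra_simps)
    also have "\<dots> \<le> exp ((6*na*\<bar>x0\<bar> + 2*na*T + \<bar>x0\<bar>) + (2*na+1) * x)"
    proof -
      have ax: "\<bar>x\<bar> \<le> x + 2 * \<bar>x0\<bar>" using x by linarith
      have "2*na*\<bar>x\<bar> \<le> 2*na*(x + 2 * \<bar>x0\<bar>)" using ax na by (simp add: mult_left_mono)
      moreover have "- x0 \<le> \<bar>x0\<bar>" by simp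
      ultimately have "2*na*(\<bar>x0\<bar>+\<bar>x\<bar>+T) + (x - x0) \<le> (6*na*\<bar>x0\<bar> + 2*na*T + \<bar>x0\<bar>) + (2*na+1) * x"
        by (simp add: algebra_simps)
      then show ?thesis by simp
    qed
    also have "\<dots> = exp (6*na*\<bar>x0\<bar> + 2*na*T + \<bar>x0\<bar>) * exp ((2*na+1) * x)" by (simp add: exp_add)
    also have "\<dots> \<le> exp (6*na*\<bar>x0\<bar> + 2*na*T + \<bar>x0\<bar>) * (Ag * exp u)"
      using Ag unfolding u_def by (simp add: mult_left_mono)
    finally show ?thesis by (simp add: mult.assoc)
  qed
  then have "(A + M0) * V * (E * E * (x - x0 + 1)) \<le> (A + M0) * V * (exp (6*na*\<bar>x0\<bar> + 2*na*T + \<bar>x0\<bar>) * Ag * exp u)"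
    using A M0 V1 by (intro mult_left_mono) auto
  also have "\<dots> = ((A + M0) * exp (6*na*\<bar>x0\<bar> + 2*na*T + \<bar>x0\<bar>) * Ag) * exp ((B+1) * u)"
    unfolding V_def by (simp add: algebra_simps exp_add[symmetric])
  finally show ?thesis unfolding V_def u_def .
qed

lemma nexp: "norm (exp (a * s)) \<le> exp (norm a * (\<bar>Re s\<bar> + \<bar>Im s\<bar>))"
proof -
  have "Re (a * s) \<le> norm (a * s)" by (rule complex_Re_le_cmod)
  also have "\<dots> = norm a * norm s" by (simp add: norm_mult)
  also have "\<dots> \<le> norm a * (\<bar>Re s\<bar> + \<bar>Im s\<bar>)" by (rule mult_left_mono[OF cmod_le norm_ge_zero])
  finally show ?thesis by simp
qed

lemma Ok_div0:
  assumes kpos: "k > 0" and O: "Ok k d b" and zero: "\<forall>j. of_nat j = \<alpha> \<longrightarrow> b j = 0"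
  shows "Ok k d (\<lambda>j. b j / (of_nat j - \<alpha>))"
proof -
  obtain eps r G H where e: "eps > 0" "r > 0" and hG: "G holomorphic_on ball 0 r" and hH: "H holomorphic_on log_sector d eps"
   and gl: "\<forall>w\<in>log_sector d eps. Re w < ln r \<longrightarrow> H w = G (exp w)" and gr: "grow k d eps H"
   and s: "\<forall>z\<in>ball 0 r. (\<lambda>j. b j * z ^ j) sums G z"
    using O unfolding Ok_def by blast
  obtain G' where hG': "G' holomorphic_on ball 0 r"
    and s': "\<forall>z\<in>ball 0 r. (\<lambda>j. b j / (of_nat j - \<alpha>) * z ^ j) sums G' z"
    and ode: "\<forall>z\<in>ball 0 r. z * deriv G' z - \<alpha> * G' z = G z"
    using div_disc[OF s zero] by blast
  define \<Omega> where "\<Omega> = log_sector d eps"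
  have o\<Omega>: "open \<Omega>" unfolding \<Omega>_def by (rule open_log_sector)
  have c\<Omega>: "convex \<Omega>" unfolding \<Omega>_def by (rule convex_log_sector)
  define f where "f = (\<lambda>w. exp (- \<alpha> * w) * H w)"
  have hf: "f holomorphic_on \<Omega>" unfolding f_def \<Omega>_def using hH by (intro holomorphic_intros)
  obtain L where L: "\<And>x. x \<in> \<Omega> \<Longrightarrow> (L has_field_derivative f x) (at x within \<Omega>)"
    using holomorphic_convex_primitive'[OF c\<Omega> o\<Omega> hf] by blast
  have Ld: "(L has_field_derivative f x) (at x)" if x: "x \<in> \<Omega>" for x
  proof -
    have "at x within \<Omega> = at x" by (rule at_within_open[OF x o\<Omega>])
    then show ?thesis using L[OF x] by simp
  qed
  have hL: "L holomorphic_on \<Omega>" unfolding holomorphic_on_open[OF o\<Omega>] using Ld by blast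
  define U where "U = \<Omega> \<inter> {w. Re w < ln r}"
  have cU: "convex U" unfolding U_def by (intro convex_Int c\<Omega> convex_halfspace_Re_lt)
  have ew: "exp w \<in> ball 0 r" if "Re w < ln r" for w
  proof -
    have "exp (Re w) < exp (ln r)" using that by simp
    then show ?thesis using e by (simp add: dist_norm)
  qed
  define D where "D = (\<lambda>w. L w - exp (- \<alpha> * w) * G' (exp w))"
  have Dd: "(D has_field_derivative 0) (at w within U)" if w: "w \<in> U" for w
  proof -
    have w\<Omega>: "w \<in> \<Omega>" and wr: "Re w < ln r" using w unfolding U_def by auto
    have dG': "(G' has_field_derivative deriv G' (exp w)) (at (exp w))"
      by (rule holomorphic_derivI[OF hG' open_ball ew[OF wr]])
    have dE: "((\<lambda>w. G' (exp w)) has_field_derivative deriv G' (exp w) * exp w) (at w)"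
      using DERIV_chain2[OF dG' DERIV_exp] by simp
    have dX: "((\<lambda>w. exp (- \<alpha> * w)) has_field_derivative exp (- \<alpha> * w) * (- \<alpha>)) (at w)"
      using DERIV_chain2[OF DERIV_exp DERIV_cmult[OF DERIV_ident, of "- \<alpha>" w UNIV]] by simp
    have "((\<lambda>w. exp (- \<alpha> * w) * G' (exp w)) has_field_derivative
            exp (- \<alpha> * w) * (- \<alpha>) * G' (exp w) + deriv G' (exp w) * exp w * exp (- \<alpha> * w)) (at w)"
      by (rule DERIV_mult[OF dX dE])
    then have "(D has_field_derivative f w - (exp (- \<alpha> * w) * (- \<alpha>) * G' (exp w) + deriv G' (exp w) * exp w * exp (- \<alpha> * w))) (at w)"
      unfolding D_def by (rule DERIV_diff[OF Ld[OF w\<Omega>]])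
    moreover have "f w - (exp (- \<alpha> * w) * (- \<alpha>) * G' (exp w) + deriv G' (exp w) * exp w * exp (- \<alpha> * w)) = 0"
    proof -
      have "H w = G (exp w)" using gl w\<Omega> wr unfolding \<Omega>_def by blast
      also have "\<dots> = exp w * deriv G' (exp w) - \<alpha> * G' (exp w)" using ode ew[OF wr] by simp
      finally have hw: "H w = exp w * deriv G' (exp w) - \<alpha> * G' (exp w)" .
      show ?thesis unfolding f_def hw by (simp add: algebra_simps)
    qed
    ultimately have "(D has_field_derivative 0) (at w)" by simp
    then show ?thesis by (rule has_field_derivative_at_within)
  qed
  obtain C where C: "\<forall>x\<in>U. D x = C" using has_field_derivative_zero_constant[OF cU Dd] by blast
  define K where "K = (\<lambda>w. exp (\<alpha> * w) * (L w - C))"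
  have hK: "K holomorphic_on \<Omega>" unfolding K_def using hL by (intro holomorphic_intros)
  have eae: "exp (\<alpha> * w) * exp (- \<alpha> * w) = 1" for w by (simp add: exp_add[symmetric])
  have LU: "L w - C = exp (- \<alpha> * w) * G' (exp w)" if "w \<in> U" for w
    using C that unfolding D_def by force
  have glK: "\<forall>w\<in>\<Omega>. Re w < ln r \<longrightarrow> K w = G' (exp w)"
  proof (intro ballI impI)
    fix w assume "w \<in> \<Omega>" "Re w < ln r"
    then have "w \<in> U" unfolding U_def by auto
    then have "K w = exp (\<alpha> * w) * exp (- \<alpha> * w) * G' (exp w)" unfolding K_def using LU by (simp add: mult.assoc)
    then show "K w = G' (exp w)" using eae by simp
  qed
  have grK: "grow k d eps K" unfolding grow_def
  proof (intro allI impI)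
    fix eps' assume eps': "eps' < eps"
    obtain A B where AB: "A \<ge> 0" "B \<ge> 0" "\<forall>w\<in>log_sector d eps'. norm (H w) \<le> A * exp (B * exp (k * Re w))"
      using gr eps' unfolding grow_def by blast
    define r0 where "r0 = r / 2"
    define x0 where "x0 = ln r0"
    have r0: "r0 > 0" "r0 < r" using e unfolding r0_def by auto
    have x0r: "x0 < ln r" unfolding x0_def using r0 by simp
    have "cball 0 r0 \<subseteq> ball 0 r" using r0 by auto
    then have "continuous_on (cball 0 r0) G'"
      using hG' holomorphic_on_imp_continuous_on holomorphic_on_subset by blast
    then have "bounded (G' ` cball 0 r0)" by (simp add: compact_continuous_image compact_imp_bounded)
    then obtain M0 where M0: "M0 > 0" "\<forall>y\<in>G' ` cball 0 r0. norm y \<le> M0" using bounded_pos by blast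
    have M0b: "norm (G' z) \<le> M0" if "norm z \<le> r0" for z using M0 that by auto
    define na where "na = norm \<alpha>"
    define T where "T = \<bar>d\<bar> + eps"
    have na0: "na \<ge> 0" unfolding na_def by simp
    have T0: "T \<ge> 0" unfolding T_def using e by simp
    obtain Ag where Ag: "Ag \<ge> 0" "\<forall>x::real. exp ((2*na+1) * x) \<le> Ag * exp (exp (k * x))"
      using exp_growth[OF kpos, of "2*na+1"] na0 by auto
    have sub': "log_sector d eps' \<subseteq> \<Omega>" unfolding \<Omega>_def using eps' by (intro log_sector_mono) simp
    have ImT: "\<bar>Im s\<bar> \<le> T" if "s \<in> log_sector d eps'" for s
    proof -
      have h1: "\<bar>Im s - d\<bar> < eps' / 2" using that unfolding log_sector_def mem_Collect_eq .
      have h4: "\<bar>Im s\<bar> \<le> \<bar>Im s - d\<bar> + \<bar>d\<bar>" by linarith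
      have h5: "eps' / 2 \<le> eps" using eps' e by simp
      show ?thesis unfolding T_def using h1 h4 h5 by linarith
    qed
    define Afin where "Afin = ((A + M0) * exp (6*na*\<bar>x0\<bar> + 2*na*T + \<bar>x0\<bar>) * Ag) + M0"
    have Afin0: "Afin \<ge> 0" unfolding Afin_def using AB M0 Ag by simp
    have bnd: "norm (K w) \<le> Afin * exp ((B + 1) * exp (k * Re w))" if w: "w \<in> log_sector d eps'" for w
    proof (cases "Re w \<le> x0")
      case True
      then have "w \<in> U" using w sub' x0r unfolding U_def by auto
      then have "K w = G' (exp w)" using glK unfolding U_def by auto
      moreover have "norm (exp w) \<le> r0" using True r0 unfolding x0_def by (simp add: ln_ge_iff[symmetric])
      ultimately have "norm (K w) \<le> M0" using M0b by simp
      also have "M0 \<le> Afin" unfolding Afin_def using AB M0 Ag by simp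
      also have "Afin \<le> Afin * exp ((B + 1) * exp (k * Re w))"
      proof -
        have "1 \<le> exp ((B + 1) * exp (k * Re w))" using AB by simp
        then have "Afin * 1 \<le> Afin * exp ((B + 1) * exp (k * Re w))" using Afin0 by (rule mult_left_mono)
        then show ?thesis by simp
      qed
      finally show ?thesis .
    next
      case False
      define x where "x = Re w"
      have xx0: "x0 < x" using False unfolding x_def by simp
      define w0 where "w0 = Complex x0 (Im w)"
      have w0s: "w0 \<in> log_sector d eps'" using w unfolding w0_def log_sector_def by simp
      have w0U: "w0 \<in> U" using w0s sub' x0r unfolding U_def w0_def by auto
      define S where "S = {s. Re s \<ge> x0} \<inter> {s. Re s \<le> x} \<inter> {s. Im s \<ge> Im w} \<inter> {s. Im s \<le> Im w}"
      have cS: "convex S" unfolding S_def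
        by (intro convex_Int convex_halfspace_Re_ge convex_halfspace_Re_le convex_halfspace_Im_ge convex_halfspace_Im_le)
      have Ss: "s \<in> log_sector d eps'" if "s \<in> S" for s
        using that w unfolding S_def log_sector_def by auto
      have wS: "w \<in> S" "w0 \<in> S" using xx0 unfolding S_def x_def w0_def by auto
      define Bd where "Bd = exp (na * (\<bar>x0\<bar> + \<bar>x\<bar> + T)) * A * exp (B * exp (k * x))"
      have fb: "norm (f s) \<le> Bd" if sS: "s \<in> S" for s
      proof -
        have s1: "s \<in> log_sector d eps'" by (rule Ss[OF sS])
        have re: "x0 \<le> Re s" "Re s \<le> x" using sS unfolding S_def by auto
        have "norm (exp (- \<alpha> * s)) \<le> exp (norm (- \<alpha>) * (\<bar>Re s\<bar> + \<bar>Im s\<bar>))" by (rule nexp)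
        also have "\<dots> \<le> exp (na * (\<bar>x0\<bar> + \<bar>x\<bar> + T))"
        proof -
          have "\<bar>Re s\<bar> + \<bar>Im s\<bar> \<le> \<bar>x0\<bar> + \<bar>x\<bar> + T" using re ImT[OF s1] by linarith
          then show ?thesis unfolding na_def by (simp add: mult_left_mono)
        qed
        finally have n1: "norm (exp (- \<alpha> * s)) \<le> exp (na * (\<bar>x0\<bar> + \<bar>x\<bar> + T))" .
        have "norm (H s) \<le> A * exp (B * exp (k * Re s))" using AB s1 by blast
        also have "\<dots> \<le> A * exp (B * exp (k * x))"
        proof -
          have "k * Re s \<le> k * x" using re kpos by (simp add: mult_left_mono)
          then have "exp (k * Re s) \<le> exp (k * x)" by simp
          then have "B * exp (k * Re s) \<le> B * exp (k * x)" using AB(2) by (rule mult_left_mono)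
          then have "exp (B * exp (k * Re s)) \<le> exp (B * exp (k * x))" by simp
          then show ?thesis using AB(1) by (rule mult_left_mono)
        qed
        finally have n2: "norm (H s) \<le> A * exp (B * exp (k * x))" .
        have "norm (f s) = norm (exp (- \<alpha> * s)) * norm (H s)" unfolding f_def by (simp add: norm_mult)
        also have "\<dots> \<le> exp (na * (\<bar>x0\<bar> + \<bar>x\<bar> + T)) * (A * exp (B * exp (k * x)))"
          by (rule mult_mono[OF n1 n2]) auto
        finally show ?thesis unfolding Bd_def by (simp add: mult.assoc)
      qed
      have dS: "(L has_field_derivative f s) (at s within S)" if "s \<in> S" for s
        using Ld[OF subsetD[OF sub' Ss[OF that]]] by (rule has_field_derivative_at_within)
      have "norm (L w - L w0) \<le> Bd * norm (w - w0)"
        by (rule field_differentiable_bound[OF cS dS fb wS])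
      also have "norm (w - w0) = x - x0"
      proof -
        have "w - w0 = of_real (x - x0)" unfolding w0_def x_def by (simp add: complex_eq_iff)
        then have "norm (w - w0) = \<bar>x - x0\<bar>" by (simp only: norm_of_real)
        then show ?thesis using xx0 by simp
      qed
      finally have Ldiff: "norm (L w - L w0) \<le> Bd * (x - x0)" .
      have "L w0 - C = exp (- \<alpha> * w0) * G' (exp w0)" by (rule LU[OF w0U])
      moreover have "norm (exp (- \<alpha> * w0)) \<le> exp (na * (\<bar>x0\<bar> + T))"
      proof -
        have "norm (exp (- \<alpha> * w0)) \<le> exp (norm (- \<alpha>) * (\<bar>Re w0\<bar> + \<bar>Im w0\<bar>))" by (rule nexp)
        also have "\<dots> \<le> exp (na * (\<bar>x0\<bar> + T))"
          using ImT[OF w0s] unfolding na_def w0_def by (simp add: mult_left_mono)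
        finally show ?thesis .
      qed
      moreover have "norm (G' (exp w0)) \<le> M0"
        using M0b r0 unfolding w0_def x0_def by simp
      ultimately have Lw0: "norm (L w0 - C) \<le> exp (na * (\<bar>x0\<bar> + T)) * M0"
        by (simp add: norm_mult mult_mono)
      have "norm (exp (\<alpha> * w)) \<le> exp (norm \<alpha> * (\<bar>Re w\<bar> + \<bar>Im w\<bar>))" by (rule nexp)
      also have "\<dots> \<le> exp (na * (\<bar>x\<bar> + T))"
        using ImT[OF w] unfolding na_def x_def by (simp add: mult_left_mono)
      finally have nw: "norm (exp (\<alpha> * w)) \<le> exp (na * (\<bar>x\<bar> + T))" .
      have "K w = exp (\<alpha> * w) * ((L w - L w0) + (L w0 - C))" unfolding K_def by simp
      then have "norm (K w) = norm (exp (\<alpha> * w)) * norm ((L w - L w0) + (L w0 - C))"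
        by (simp add: norm_mult)
      also have "\<dots> \<le> norm (exp (\<alpha> * w)) * (norm (L w - L w0) + norm (L w0 - C))"
        by (rule mult_left_mono[OF norm_triangle_ineq norm_ge_zero])
      finally have "norm (K w) \<le> norm (exp (\<alpha> * w)) * (norm (L w - L w0) + norm (L w0 - C))" .
      also have "\<dots> \<le> exp (na * (\<bar>x\<bar> + T)) * (Bd * (x - x0) + exp (na * (\<bar>x0\<bar> + T)) * M0)"
        using nw Ldiff Lw0 by (intro mult_mono add_mono) auto
      also have "\<dots> \<le> ((A + M0) * exp (6*na*\<bar>x0\<bar> + 2*na*T + \<bar>x0\<bar>) * Ag) * exp ((B+1) * exp (k*x))"
        unfolding Bd_def using real_bound[OF na0 T0 xx0 AB(1) less_imp_le[OF M0(1)] AB(2) Ag(2)[rule_format, of x]] .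
      also have "\<dots> \<le> Afin * exp ((B+1) * exp (k*x))" unfolding Afin_def using M0 by simp
      finally show ?thesis unfolding x_def .
    qed
    have p: "B + 1 \<ge> 0" using AB by simp
    show "\<exists>A\<ge>0. \<exists>B\<ge>0. \<forall>w\<in>log_sector d eps'. cmod (K w) \<le> A * exp (B * exp (k * Re w))"
      using bnd Afin0 p by blast
  qed
  show ?thesis unfolding Ok_def using e hG' hK glK grK s' unfolding \<Omega>_def by blast
qed

lemma Ok_div: assumes kpos: "k > 0" and O: "Ok k d b" shows "Ok k d (\<lambda>j. b j / (of_nat j - \<alpha>))"
proof -
  define b0 where "b0 = (\<lambda>j. if of_nat j = \<alpha> then 0 else b j)"
  have fin: "finite {j::nat. of_nat j = \<alpha>}"
  proof -
    have "{j::nat. of_nat j = \<alpha>} = of_nat -` {\<alpha>}" by auto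
    then show ?thesis using finite_vimageI[of "{\<alpha>}" "of_nat :: nat \<Rightarrow> complex"] inj_of_nat by simp
  qed
  have "Ok k d b0" by (rule Ok_finmod[OF kpos fin O]) (simp add: b0_def)
  then have "Ok k d (\<lambda>j. b0 j / (of_nat j - \<alpha>))" by (rule Ok_div0[OF kpos]) (simp add: b0_def)
  moreover have "(\<lambda>j. b0 j / (of_nat j - \<alpha>)) = (\<lambda>j. b j / (of_nat j - \<alpha>))" by (auto simp: b0_def)
  ultimately show ?thesis by simp
qed

lemma Ok_polymult: assumes kpos: "k > 0" and O: "Ok k d b" shows "Ok k d (\<lambda>j. poly q (of_nat j) * b j)"
proof (induction q rule: pCons_induct)
  case 0
  show ?case using Ok_cmult[OF O, of 0] by simp
next
  case (pCons a q)
  have "Ok k d (\<lambda>j. a * b j + of_nat j * (poly q (of_nat j) * b j))"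
    by (intro Ok_add Ok_cmult O Ok_theta pCons.IH kpos)
  moreover have "(\<lambda>j. a * b j + of_nat j * (poly q (of_nat j) * b j)) = (\<lambda>j. poly (pCons a q) (of_nat j) * b j)"
    by (auto simp: algebra_simps)
  ultimately show ?case by simp
qed

lemma Ok_polydiv: assumes kpos: "k > 0" and O: "Ok k d b" and q: "q \<noteq> 0"
  shows "Ok k d (\<lambda>j. b j / poly q (of_nat j))"
proof -
  obtain root where R: "smult (lead_coeff q) (\<Prod>i<degree q. [:-root i, 1:]) = q"
    using complex_poly_decompose' by blast
  define lc where "lc = lead_coeff q"
  have lc: "lc \<noteq> 0" using q unfolding lc_def by simp
  have pq: "poly q x = lc * (\<Prod>i<degree q. (x - root i))" for x
  proof -
    have "poly q x = poly (smult (lead_coeff q) (\<Prod>i<degree q. [:-root i, 1:])) x" using R by simp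
    also have "\<dots> = lc * (\<Prod>i<degree q. (x - root i))" unfolding lc_def by (simp add: poly_prod)
    finally show ?thesis .
  qed
  have ind: "Ok k d (\<lambda>j. b j / (lc * (\<Prod>i<n. (of_nat j - root i))))" for n
  proof (induction n)
    case 0
    show ?case using Ok_cmult[OF O, of "1 / lc"] by simp
  next
    case (Suc n)
    have "Ok k d (\<lambda>j. b j / (lc * (\<Prod>i<n. (of_nat j - root i))) / (of_nat j - root n))"
      by (rule Ok_div[OF kpos Suc.IH])
    moreover have "(\<lambda>j. b j / (lc * (\<Prod>i<n. (of_nat j - root i))) / (of_nat j - root n)) =
      (\<lambda>j. b j / (lc * (\<Prod>i<Suc n. (of_nat j - root i))))"
      by (simp add: divide_divide_eq_left mult.assoc)
    ultimately show ?case by simp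
  qed
  show ?thesis using ind[of "degree q"] by (simp add: pq)
qed

lemma main_dir:
  fixes m1 m2 a :: "nat \<Rightarrow> complex" and p1 p2 :: "complex poly" and c k d :: real
  assumes m1: "\<And>j. m1 j \<noteq> 0" and m2: "\<And>j. m2 j \<noteq> 0" and p1: "p1 \<noteq> 0" and c: "c > 0"
    and rel: "\<And>j. poly p1 (of_nat j) * m1 j = poly p2 (of_nat j) * m2 j * complex_of_real c ^ j"
    and kpos: "k > 0" and O: "Ok k d (\<lambda>j. a j / m1 j)"
  shows "Ok k d (\<lambda>j. a j / m2 j)"
proof -
  have "Ok k d (\<lambda>j. a j / m1 j * complex_of_real c ^ j)" by (rule Ok_scale[OF c O])
  then have "Ok k d (\<lambda>j. poly p2 (of_nat j) * (a j / m1 j * complex_of_real c ^ j))" by (rule Ok_polymult[OF kpos])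
  then have O2: "Ok k d (\<lambda>j. poly p2 (of_nat j) * (a j / m1 j * complex_of_real c ^ j) / poly p1 (of_nat j))"
    by (rule Ok_polydiv[OF kpos _ p1])
  have fin: "finite {j::nat. poly p1 (of_nat j) = 0}"
  proof -
    have "{j::nat. poly p1 (of_nat j) = 0} = of_nat -` {x. poly p1 x = 0}" by auto
    then show ?thesis using finite_vimageI[OF poly_roots_finite[OF p1], of "of_nat :: nat \<Rightarrow> complex"] inj_of_nat by simp
  qed
  show ?thesis
  proof (rule Ok_finmod[OF kpos fin O2], intro allI impI)
    fix j assume "j \<notin> {j. poly p1 (of_nat j) = 0}"
    then have p1j: "poly p1 (of_nat j) \<noteq> 0" by simp
    have cj: "complex_of_real c ^ j \<noteq> 0" using c by simp
    have m2eq: "m2 j = poly p1 (of_nat j) * m1 j / (poly p2 (of_nat j) * complex_of_real c ^ j)"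
    proof -
      have ne: "poly p1 (of_nat j) * m1 j \<noteq> 0" using p1j m1 by simp
      then have "poly p2 (of_nat j) * complex_of_real c ^ j \<noteq> 0" using rel[of j] by auto
      then show ?thesis using rel[of j] by (simp add: field_simps)
    qed
    have ne2: "poly p2 (of_nat j) \<noteq> 0"
      using rel[of j] p1j m1[of j] by auto
    show "a j / m2 j = poly p2 (of_nat j) * (a j / m1 j * complex_of_real c ^ j) / poly p1 (of_nat j)"
      unfolding m2eq using p1j m1[of j] cj ne2 by (simp add: field_simps)
  qed
qed

theorem proposition3:
  fixes m1 m2 a :: "nat \<Rightarrow> complex" and p1 p2 :: "complex poly" and c k d :: real
  assumes "\<And>j. m1 j \<noteq> 0" and "\<And>j. m2 j \<noteq> 0"
    and "p1 \<noteq> 0" and "p2 \<noteq> 0" and "c > 0"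
    and "\<And>j. poly p1 (of_nat j) * m1 j = poly p2 (of_nat j) * m2 j * complex_of_real c ^ j"
    and "k > 0"
  shows "series_in_Ok k d (\<lambda>j. a j / m1 j) \<longleftrightarrow> series_in_Ok k d (\<lambda>j. a j / m2 j)"
proof
  assume "series_in_Ok k d (\<lambda>j. a j / m1 j)"
  then have "Ok k d (\<lambda>j. a j / m1 j)" by (rule series_imp_Ok)
  then have "Ok k d (\<lambda>j. a j / m2 j)" by (rule main_dir[OF assms(1,2,3,5,6,7)])
  then show "series_in_Ok k d (\<lambda>j. a j / m2 j)" by (rule Ok_imp_series)
next
  assume "series_in_Ok k d (\<lambda>j. a j / m2 j)"
  then have O: "Ok k d (\<lambda>j. a j / m2 j)" by (rule series_imp_Ok)
  have c': "1 / c > 0" using assms(5) by simp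
  have rel': "poly p2 (of_nat j) * m2 j = poly p1 (of_nat j) * m1 j * complex_of_real (1 / c) ^ j" for j
  proof -
    have cj: "complex_of_real c ^ j \<noteq> 0" using assms(5) by simp
    have "poly p1 (of_nat j) * m1 j * complex_of_real (1 / c) ^ j = poly p1 (of_nat j) * m1 j / complex_of_real c ^ j"
      by (simp add: power_divide divide_inverse power_inverse)
    also have "\<dots> = poly p2 (of_nat j) * m2 j" using assms(6)[of j] cj by simp
    finally show ?thesis by simp
  qed
  have "Ok k d (\<lambda>j. a j / m1 j)" by (rule main_dir[OF assms(2,1,4) c' rel' assms(7) O])
  then show "series_in_Ok k d (\<lambda>j. a j / m1 j)" by (rule Ok_imp_series)
qed

end
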